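(* Let $v(0)\in\mathcal N^*$, $v(0)\neq0$, and $T>0$. For $0<\lambda\le1$ let $w^*$ be the solution on $[0,T]$ of $$\dot w^*(t)=\frac{\lambda}{w^*(t)E_0(t+w^*(t))}-1,\qquad w^*(0)=\frac1{m_1(0)}.$$ Then there exist constants $d_1,d_2$ depending only on $v(0)$ and $T$ such that for all $0<\lambda\le1$ and all $t$ with $\frac1{m_1(0)}+d_1\lambda\log(1/\lambda)\le t\le T$, $$\Big|w^*(t)-\frac{\lambda}{E_0(t)}\Big|\le d_2\lambda^2.$$
   Context: $\mathcal N^*$: finitely supported sequences $v=(v_k)_{k\ge1}$ of nonnegative reals; $m_1(0)=\sum_kkv_k(0)$. Critical core: with $U_0(x)=\sum_kv_k(0)(e^{-kx}-1)$, $E_0:(0,\infty)\to(0,\infty)$ is defined by $E_0(-1/U_0'(x))=\frac{(-U_0'(x))^3}{U_0''(x)}$ for $x\in\mathbb R$ ($x\mapsto-1/U_0'(x)$ is a bijection $\mathbb R\to(0,\infty)$). *)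

theory Defs
  imports "HOL-Analysis.Analysis"
begin

text \<open>Elements of N*: finitely supported sequences (v_k)_{k>=1} of nonnegative reals,
  represented as functions nat => real with v 0 = 0 (index 0 unused).\<close>
definition Nstar :: "(nat \<Rightarrow> real) \<Rightarrow> bool" where
  "Nstar v \<longleftrightarrow> (\<forall>k. 0 \<le> v k) \<and> finite {k. v k \<noteq> 0} \<and> v 0 = 0"

definition m1 :: "(nat \<Rightarrow> real) \<Rightarrow> real" where
  "m1 v = (\<Sum>k\<in>{k. v k \<noteq> 0}. real k * v k)"

definition U0 :: "(nat \<Rightarrow> real) \<Rightarrow> real \<Rightarrow> real" where
  "U0 v x = (\<Sum>k\<in>{k. v k \<noteq> 0}. v k * (exp (- real k * x) - 1))"

definition E0 :: "(nat \<Rightarrow> real) \<Rightarrow> real \<Rightarrow> real" where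
  "E0 v s = (let x = (THE x. - 1 / deriv (U0 v) x = s)
             in (- deriv (U0 v) x) ^ 3 / deriv (deriv (U0 v)) x)"

end

theory Submission
  imports Defs
begin


locale vsetup =
  fixes v :: "nat \<Rightarrow> real"
  assumes Ns: "Nstar v" and nz: "v \<noteq> (\<lambda>k. 0)"
begin

definition "F = {k. v k \<noteq> 0}"
definition "P x = (\<Sum>k\<in>F. real k * v k * exp (- real k * x))"
definition "Q x = (\<Sum>k\<in>F. real k ^ 2 * v k * exp (- real k * x))"
definition "R x = (\<Sum>k\<in>F. real k ^ 3 * v k * exp (- real k * x))"
definition "K = real (Max F)"

lemma finF: "finite F" using Ns by (simp add: Nstar_def F_def)
lemma neF: "F \<noteq> {}" using nz by (auto simp: F_def)
lemma Fpos: "k \<in> F \<Longrightarrow> 1 \<le> k \<and> 0 < v k"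
  using Ns unfolding F_def Nstar_def
  by (metis (mono_tags, lifting) less_eq_real_def less_one mem_Collect_eq not_less)
lemma Kge: "k \<in> F \<Longrightarrow> real k \<le> K"
  unfolding K_def using finF by simp
lemma K1: "1 \<le> K" using neF Fpos Kge by (metis all_not_in_conv of_nat_1 of_nat_le_iff order_trans)

lemma kpos: "k \<in> F \<Longrightarrow> 0 < real k" using Fpos by fastforce
lemma kge1: "k \<in> F \<Longrightarrow> 1 \<le> real k" using Fpos by fastforce
lemma vpos: "k \<in> F \<Longrightarrow> 0 < v k" using Fpos by blast
lemma P_pos: "0 < P x"
  unfolding P_def using finF neF kpos vpos
  by (intro sum_pos) (auto)
lemma PQ: "P x \<le> Q x"
  unfolding P_def Q_def
proof (intro sum_mono)
  fix k assume k: "k \<in> F"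
  have "real k \<le> real k ^ 2" using Fpos[OF k] by (simp add: power2_eq_square)
  then show "real k * v k * exp (- real k * x) \<le> real k ^ 2 * v k * exp (- real k * x)"
    using vpos[OF k] by (intro mult_right_mono) auto
qed
lemma QK: "Q x \<le> K * P x"
  unfolding P_def Q_def sum_distrib_left
proof (intro sum_mono)
  fix k assume k: "k \<in> F"
  have "real k ^ 2 \<le> K * real k" using Kge[OF k] kpos[OF k] by (simp add: power2_eq_square)
  then show "real k ^ 2 * v k * exp (- real k * x) \<le> K * (real k * v k * exp (- real k * x))"
    using vpos[OF k] by (simp add: mult.assoc[symmetric] mult_right_mono)
qed
lemma RK: "R x \<le> K * Q x"
  unfolding R_def Q_def sum_distrib_left
proof (intro sum_mono)
  fix k assume k: "k \<in> F"
  have "real k ^ 3 \<le> K * real k ^ 2" using Kge[OF k] kpos[OF k] by (simp add: power2_eq_square power3_eq_cube)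
  then show "real k ^ 3 * v k * exp (- real k * x) \<le> K * (real k ^ 2 * v k * exp (- real k * x))"
    using vpos[OF k] by (simp add: mult.assoc[symmetric] mult_right_mono)
qed
lemma Q_pos: "0 < Q x" using PQ P_pos less_le_trans by blast
lemma R_pos: "0 \<le> R x"
  unfolding R_def using kpos vpos by (intro sum_nonneg) (auto intro!: mult_nonneg_nonneg less_imp_le)

lemma P0: "P 0 = m1 v" unfolding P_def m1_def F_def by simp

lemma dU: "(U0 v has_real_derivative - P x) (at x)"
proof -
  have "U0 v = (\<lambda>x. \<Sum>k\<in>F. v k * (exp (- real k * x) - 1))"
    by (auto simp: U0_def F_def)
  moreover have "((\<lambda>x. \<Sum>k\<in>F. v k * (exp (- real k * x) - 1)) has_real_derivative
      (\<Sum>k\<in>F. v k * (exp (- real k * x) * (- real k)))) (at x)"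
    by (auto intro!: derivative_eq_intros sum.cong simp: algebra_simps)
  moreover have "(\<Sum>k\<in>F. v k * (exp (- real k * x) * (- real k))) = - P x"
    unfolding P_def by (subst sum_negf[symmetric], rule sum.cong) (auto simp: algebra_simps)
  ultimately show ?thesis by simp
qed
lemma dP: "(P has_real_derivative - Q x) (at x)"
proof -
  have "((\<lambda>x. \<Sum>k\<in>F. real k * v k * exp (- real k * x)) has_real_derivative
      (\<Sum>k\<in>F. real k * v k * (exp (- real k * x) * (- real k)))) (at x)"
    by (auto intro!: derivative_eq_intros sum.cong simp: algebra_simps)
  moreover have "(\<Sum>k\<in>F. real k * v k * (exp (- real k * x) * (- real k))) = - Q x"
    unfolding Q_def by (subst sum_negf[symmetric], rule sum.cong) (auto simp: algebra_simps power2_eq_square)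
  ultimately show ?thesis unfolding P_def[abs_def] by simp
qed
lemma dQ: "(Q has_real_derivative - R x) (at x)"
proof -
  have "((\<lambda>x. \<Sum>k\<in>F. real k ^ 2 * v k * exp (- real k * x)) has_real_derivative
      (\<Sum>k\<in>F. real k ^ 2 * v k * (exp (- real k * x) * (- real k)))) (at x)"
    by (auto intro!: derivative_eq_intros sum.cong simp: algebra_simps)
  moreover have "(\<Sum>k\<in>F. real k ^ 2 * v k * (exp (- real k * x) * (- real k))) = - R x"
    unfolding R_def by (subst sum_negf[symmetric], rule sum.cong) (auto simp: algebra_simps power2_eq_square power3_eq_cube)
  ultimately show ?thesis unfolding Q_def[abs_def] by simp
qed

lemma derivU: "deriv (U0 v) = (\<lambda>x. - P x)"
  using dU DERIV_imp_deriv by blast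
lemma derivU2: "deriv (deriv (U0 v)) x = Q x"
proof -
  have "((\<lambda>x. - P x) has_real_derivative Q x) (at x)"
    using dP[of x] by (auto intro!: derivative_eq_intros)
  then show ?thesis unfolding derivU using DERIV_imp_deriv by blast
qed

lemma P_strict: "x < y \<Longrightarrow> P y < P x"
  unfolding P_def
proof (intro sum_strict_mono finF neF)
  fix k assume xy: "x < y" and k: "k \<in> F"
  have "exp (- real k * y) < exp (- real k * x)" using kpos[OF k] xy by simp
  then show "real k * v k * exp (- real k * y) < real k * v k * exp (- real k * x)"
    using kpos[OF k] vpos[OF k] by simp
qed

lemma P_cont: "continuous_on S P"
  using dP by (meson DERIV_continuous continuous_at_imp_continuous_on)

lemma P_le: "0 \<le> x \<Longrightarrow> P x \<le> m1 v * exp (- x)"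
proof -
  assume x: "0 \<le> x"
  have "P x \<le> (\<Sum>k\<in>F. real k * v k * exp (- x))"
    unfolding P_def
  proof (intro sum_mono)
    fix k assume k: "k \<in> F"
    have "- real k * x \<le> - x" using mult_right_mono[OF kge1[OF k] x] by simp
    then show "real k * v k * exp (- real k * x) \<le> real k * v k * exp (- x)"
      using kpos[OF k] vpos[OF k] by (intro mult_left_mono) auto
  qed
  also have "\<dots> = m1 v * exp (- x)" unfolding m1_def F_def by (simp add: sum_distrib_right)
  finally show ?thesis .
qed
lemma P_ge: "x \<le> 0 \<Longrightarrow> m1 v * exp (- x) \<le> P x"
proof -
  assume x: "x \<le> 0"
  have "(\<Sum>k\<in>F. real k * v k * exp (- x)) \<le> P x"
    unfolding P_def
  proof (intro sum_mono)
    fix k assume k: "k \<in> F"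
    have "- x \<le> - real k * x" using mult_right_mono_neg[OF kge1[OF k] x] by simp
    then show "real k * v k * exp (- x) \<le> real k * v k * exp (- real k * x)"
      using kpos[OF k] vpos[OF k] by (intro mult_left_mono) auto
  qed
  moreover have "(\<Sum>k\<in>F. real k * v k * exp (- x)) = m1 v * exp (- x)" unfolding m1_def F_def by (simp add: sum_distrib_right)
  ultimately show ?thesis by simp
qed

lemma m_pos: "0 < m1 v" using P0 P_pos by metis

end



context vsetup begin

definition "X s = (THE x. - 1 / deriv (U0 v) x = s)"
definition "A s = 1 / E0 v s"
abbreviation "m \<equiv> m1 v"

lemma P_exists: assumes s: "0 < s" shows "\<exists>x. P x = 1 / s"
proof -
  define y where "y = \<bar>ln (m * s)\<bar>"
  have ms: "0 < m * s" using m_pos s by simp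
  have "P (- y) \<ge> m * exp y" using P_ge[of "-y"] by (simp add: y_def)
  moreover have "m * exp y \<ge> m * exp (- ln (m * s))" using m_pos by (simp add: y_def)
  moreover have "m * exp (- ln (m * s)) = 1 / s" using ms m_pos s by (simp add: exp_minus field_simps)
  ultimately have lo: "1 / s \<le> P (- y)" by linarith
  have "P y \<le> m * exp (- y)" using P_le[of y] by (simp add: y_def)
  moreover have "m * exp (- y) \<le> m * exp (- ln (m * s))" using m_pos by (simp add: y_def)
  ultimately have hi: "P y \<le> 1 / s" using \<open>m * exp (- ln (m * s)) = 1 / s\<close> by linarith
  have "- y \<le> y" by (simp add: y_def)
  from IVT2'[of P y "1/s" "-y", OF hi lo this P_cont] show ?thesis by blast
qed

lemma P_inj: "P x = P y \<Longrightarrow> x = y"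
  using P_strict by (metis linorder_neqE_linordered_idom order_less_irrefl)

lemma X_eq: assumes s: "0 < s" shows "P (X s) = 1 / s"
proof -
  obtain x where x: "P x = 1 / s" using P_exists[OF s] by blast
  have eq: "(- 1 / deriv (U0 v) y = s) \<longleftrightarrow> P y = 1 / s" for y
    using P_pos[of y] s unfolding derivU by (auto simp: field_simps)
  have "(THE x. - 1 / deriv (U0 v) x = s) = x"
    by (rule the_equality) (use x P_inj eq in auto)
  then show ?thesis using x by (simp add: X_def)
qed

lemma E0_eq: "E0 v s = P (X s) ^ 3 / Q (X s)"
  unfolding E0_def X_def[symmetric] Let_def derivU2 by (simp add: derivU)

lemma E0_pos: "0 < E0 v s" unfolding E0_eq using P_pos Q_pos by simp

lemma A_eq: assumes s: "0 < s" shows "A s = s ^ 2 * (Q (X s) / P (X s))"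
proof -
  have p: "P (X s) = 1 / s" by (rule X_eq[OF s])
  show ?thesis unfolding A_def E0_eq p using s by (simp add: field_simps power3_eq_cube power2_eq_square)
qed

lemma A_pos: "0 < A s" unfolding A_def using E0_pos by simp

lemma A_bounds: assumes s: "0 < s" shows "s ^ 2 \<le> A s \<and> A s \<le> K * s ^ 2"
proof -
  define r where "r = Q (X s) / P (X s)"
  have "1 \<le> r" using PQ P_pos by (simp add: r_def)
  moreover have "r \<le> K" using QK P_pos by (simp add: divide_le_eq r_def)
  moreover have "A s = s^2 * r" unfolding r_def by (rule A_eq[OF s])
  ultimately show ?thesis
    using mult_left_mono[of 1 r "s^2"] mult_left_mono[of r K "s^2"] by (simp add: mult.commute)
qed

lemma X_nonneg: assumes s: "1 / m \<le> s" shows "0 \<le> X s"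
proof (rule ccontr)
  have s0: "0 < s" using s m_pos by (meson less_le_trans zero_less_divide_1_iff)
  assume "\<not> 0 \<le> X s"
  then have "P 0 < P (X s)" using P_strict by simp
  then have "m < 1 / s" using X_eq[OF s0] P0 by simp
  then show False using s s0 m_pos by (simp add: field_simps)
qed

lemma S_mono: assumes x1: "0 \<le> x1" and x12: "x1 \<le> x2"
  shows "(x2 - x1) / m \<le> 1 / P x2 - 1 / P x1"
proof -
  let ?g = "\<lambda>x. 1 / P x - x / m"
  have "?g x1 \<le> ?g x2"
  proof (rule DERIV_nonneg_imp_nondecreasing[OF x12])
    fix x assume x: "x1 \<le> x" "x \<le> x2"
    have d: "(?g has_real_derivative (Q x / (P x)^2 - 1 / m)) (at x)"
      using P_pos[of x] m_pos by (auto intro!: derivative_eq_intros dP simp: power2_eq_square)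
    have "P x \<le> P 0"
    proof (cases "x = 0")
      case False then show ?thesis using P_strict[of 0 x] x x1 by simp
    qed simp
    then have "P x \<le> m" using P0 by simp
    then have "1 / m \<le> 1 / P x" using P_pos[of x] m_pos by (intro divide_left_mono) auto
    also have "1 / P x \<le> Q x / (P x)^2" using PQ[of x] P_pos[of x] by (simp add: field_simps power2_eq_square)
    finally show "\<exists>y. (?g has_real_derivative y) (at x) \<and> 0 \<le> y" using d by auto
  qed
  then show ?thesis by (simp add: diff_divide_distrib)
qed

lemma r_deriv: "((\<lambda>x. Q x / P x) has_real_derivative ((- R x * P x + Q x * Q x) / (P x)^2)) (at x)"
proof -
  have "((\<lambda>x. Q x / P x) has_real_derivative ((- R x) * P x - Q x * (- Q x)) / (P x * P x)) (at x)"
    using DERIV_divide[OF dQ dP] P_pos[of x] by simp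
  then show ?thesis by (simp add: power2_eq_square)
qed

lemma r_deriv_bounds: "-(K^2) \<le> (- R x * P x + Q x * Q x) / (P x)^2 \<and> (- R x * P x + Q x * Q x) / (P x)^2 \<le> K^2"
proof -
  have p: "0 < P x" by (rule P_pos)
  have "K * Q x \<le> K * (K * P x)" using QK[of x] K1 by (intro mult_left_mono) auto
  then have "R x \<le> K^2 * P x" using RK[of x] by (simp add: power2_eq_square mult.assoc)
  then have "R x * P x \<le> K^2 * (P x)^2" using p by (simp add: power2_eq_square mult_right_mono mult.assoc)
  moreover have "Q x * Q x \<le> (K * P x) * (K * P x)" using QK[of x] Q_pos[of x] K1 p
    by (intro mult_mono) auto
  moreover have "(K * P x) * (K * P x) = K^2 * (P x)^2" by (simp add: power2_eq_square)
  moreover have "0 \<le> Q x * Q x" by simp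
  moreover have "0 \<le> R x * P x" using R_pos p by simp
  ultimately have h1: "-(K^2) * (P x)^2 \<le> - R x * P x + Q x * Q x"
    and h2: "- R x * P x + Q x * Q x \<le> K^2 * (P x)^2" by linarith+
  have pp: "0 < (P x)^2" using p by simp
  show ?thesis using h1 h2 pp by (simp add: pos_le_divide_eq pos_divide_le_eq)
qed

lemma r_lip: "\<bar>Q x1 / P x1 - Q x2 / P x2\<bar> \<le> K^2 * \<bar>x1 - x2\<bar>"
proof -
  have main: "\<bar>Q a / P a - Q b / P b\<bar> \<le> K^2 * (b - a)" if ab: "a \<le> b" for a b
  proof -
    have 1: "Q a / P a + K^2 * a \<le> Q b / P b + K^2 * b"
    proof (rule DERIV_nonneg_imp_nondecreasing[OF ab, where f = "\<lambda>x. Q x / P x + K^2 * x"])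
      fix x
      show "\<exists>y. ((\<lambda>x. Q x / P x + K^2 * x) has_real_derivative y) (at x) \<and> 0 \<le> y"
        using DERIV_add[OF r_deriv[of x] DERIV_cmult[OF DERIV_ident, of "K^2"]] r_deriv_bounds[of x]
        by (intro exI[where x="(- R x * P x + Q x * Q x) / (P x)^2 + K^2 * 1"]) auto
    qed
    have 2: "Q b / P b - K^2 * b \<le> Q a / P a - K^2 * a"
    proof (rule DERIV_nonpos_imp_nonincreasing[OF ab, where f = "\<lambda>x. Q x / P x - K^2 * x"])
      fix x
      show "\<exists>y. ((\<lambda>x. Q x / P x - K^2 * x) has_real_derivative y) (at x) \<and> y \<le> 0"
        using DERIV_diff[OF r_deriv[of x] DERIV_cmult[OF DERIV_ident, of "K^2"]] r_deriv_bounds[of x]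
        by (intro exI[where x="(- R x * P x + Q x * Q x) / (P x)^2 - K^2 * 1"]) auto
    qed
    from 1 2 show ?thesis by (simp add: abs_le_iff algebra_simps)
  qed
  show ?thesis
  proof (cases "x1 \<le> x2")
    case True then show ?thesis using main[OF True] by simp
  next
    case False then show ?thesis using main[of x2 x1] by (simp add: abs_minus_commute)
  qed
qed

lemma X_lip: assumes "1/m \<le> s1" "1/m \<le> s2" shows "\<bar>X s1 - X s2\<bar> \<le> m * \<bar>s1 - s2\<bar>"
proof -
  have s0: "0 < s1" "0 < s2" using assms m_pos by (meson less_le_trans zero_less_divide_1_iff)+
  have main: "X b - X a \<le> m * \<bar>b - a\<bar>" if "X a \<le> X b" "1/m \<le> a" "1/m \<le> b" "0 < a" "0 < b" for a b
  proof -
    have "(X b - X a) / m \<le> 1 / P (X b) - 1 / P (X a)"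
      by (rule S_mono[OF X_nonneg[OF that(2)] that(1)])
    also have "\<dots> = b - a" using X_eq that by simp
    finally have "(X b - X a) / m \<le> b - a" .
    then have "X b - X a \<le> m * (b - a)" using m_pos by (simp add: field_simps)
    also have "\<dots> \<le> m * \<bar>b - a\<bar>" using m_pos by (intro mult_left_mono) auto
    finally show ?thesis .
  qed
  show ?thesis
  proof (cases "X s1 \<le> X s2")
    case True then show ?thesis using main[of s1 s2] assms s0 by (simp add: abs_minus_commute)
  next
    case False then show ?thesis using main[of s2 s1] assms s0 by simp
  qed
qed

lemma A_lip: assumes "1/m \<le> s1" "1/m \<le> s2" "s1 \<le> b" "s2 \<le> b"
  shows "\<bar>A s1 - A s2\<bar> \<le> (2 * b * K + b^2 * K^2 * m) * \<bar>s1 - s2\<bar>"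
proof -
  have s0: "0 < s1" "0 < s2" using assms m_pos by (meson less_le_trans zero_less_divide_1_iff)+
  define r1 where "r1 = Q (X s1) / P (X s1)"
  define r2 where "r2 = Q (X s2) / P (X s2)"
  have r1: "0 \<le> r1" "r1 \<le> K" unfolding r1_def using QK P_pos Q_pos by (auto simp: divide_le_eq less_imp_le)
  have "\<bar>r1 - r2\<bar> \<le> K^2 * \<bar>X s1 - X s2\<bar>" unfolding r1_def r2_def by (rule r_lip)
  also have "\<dots> \<le> K^2 * (m * \<bar>s1 - s2\<bar>)" using X_lip[OF assms(1,2)] by (simp add: mult_left_mono)
  finally have rr: "\<bar>r1 - r2\<bar> \<le> K^2 * m * \<bar>s1 - s2\<bar>" by simp
  have a1: "A s1 = s1^2 * r1" unfolding r1_def by (rule A_eq[OF s0(1)])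
  have a2: "A s2 = s2^2 * r2" unfolding r2_def by (rule A_eq[OF s0(2)])
  have "A s1 - A s2 = (s1^2 - s2^2) * r1 + s2^2 * (r1 - r2)"
    unfolding a1 a2 by (simp add: algebra_simps)
  then have "\<bar>A s1 - A s2\<bar> \<le> \<bar>(s1^2 - s2^2) * r1\<bar> + \<bar>s2^2 * (r1 - r2)\<bar>"
    by (simp add: abs_triangle_ineq)
  also have "\<dots> = \<bar>s1^2 - s2^2\<bar> * r1 + s2^2 * \<bar>r1 - r2\<bar>"
    using r1 by (simp add: abs_mult)
  also have "\<bar>s1^2 - s2^2\<bar> = (s1 + s2) * \<bar>s1 - s2\<bar>"
  proof -
    have "s1^2 - s2^2 = (s1+s2)*(s1-s2)" by (simp add: power2_eq_square algebra_simps)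
    then show ?thesis using s0 by (simp add: abs_mult)
  qed
  also have "(s1 + s2) * \<bar>s1 - s2\<bar> * r1 \<le> (2 * b) * \<bar>s1 - s2\<bar> * K"
    using assms s0 r1 by (intro mult_mono) auto
  also have "s2^2 * \<bar>r1 - r2\<bar> \<le> b^2 * (K^2 * m * \<bar>s1 - s2\<bar>)"
    using assms s0 rr by (intro mult_mono power_mono) auto
  finally show ?thesis by (simp add: algebra_simps)
qed

end



lemma barrier:
  fixes f :: "real \<Rightarrow> real"
  assumes ab: "a \<le> b" and cont: "continuous_on {a..b} f" and fa: "f a \<le> 0"
    and step: "\<And>t. a \<le> t \<Longrightarrow> t < b \<Longrightarrow> f t = 0 \<Longrightarrow>
        \<exists>d>0. \<forall>h>0. h < d \<longrightarrow> t + h \<le> b \<longrightarrow> f (t + h) \<le> 0"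
  shows "\<forall>t\<in>{a..b}. f t \<le> 0"
proof (rule ccontr)
  assume "\<not> ?thesis"
  then obtain t2 where t2: "a \<le> t2" "t2 \<le> b" "f t2 > 0" by auto
  define Z where "Z = {t \<in> {a..t2}. f t = 0}"
  have cont2: "continuous_on {a..t2} f" using t2 by (intro continuous_on_subset[OF cont]) auto
  have "closed Z" unfolding Z_def by (rule continuous_closed_preimage_constant[OF cont2]) auto
  moreover have "bounded Z" unfolding Z_def by (rule bounded_subset[of "{a..t2}"]) auto
  ultimately have cZ: "compact Z" using compact_eq_bounded_closed by blast
  obtain z where z: "a \<le> z" "z \<le> t2" "f z = 0"
    using IVT'[of f a 0 t2] fa t2 cont2 by auto
  then have "Z \<noteq> {}" unfolding Z_def by auto
  from compact_attains_sup[OF cZ this] obtain t0 where t0: "t0 \<in> Z" "\<forall>y\<in>Z. y \<le> t0" by blast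
  have t0': "a \<le> t0" "t0 \<le> t2" "f t0 = 0" using t0 unfolding Z_def by auto
  have "t0 \<noteq> t2" using t0' t2 by auto
  with t0' have t02: "t0 < t2" by simp
  have pos: "f y > 0" if y: "t0 < y" "y \<le> t2" for y
  proof (rule ccontr)
    assume "\<not> f y > 0"
    then have "f y \<le> 0" by simp
    have "continuous_on {y..t2} f" using y t0' by (intro continuous_on_subset[OF cont2]) auto
    then obtain z where "y \<le> z" "z \<le> t2" "f z = 0" using IVT'[of f y 0 t2] \<open>f y \<le> 0\<close> t2 y by auto
    then have "z \<in> Z" using y t0' unfolding Z_def by auto
    then show False using t0(2) \<open>y \<le> z\<close> y by force
  qed
  obtain d where d: "d > 0" "\<forall>h>0. h < d \<longrightarrow> t0 + h \<le> b \<longrightarrow> f (t0 + h) \<le> 0"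
    using step[of t0] t0' t02 t2 by auto
  define h where "h = min (d/2) (t2 - t0)"
  have "h > 0" "h < d" "t0 + h \<le> b" "t0 + h \<le> t2" using d t02 t2 by (auto simp: h_def)
  then have "f (t0 + h) \<le> 0" "f (t0 + h) > 0" using d pos[of "t0 + h"] by auto
  then show False by simp
qed

lemma within_nonpos_dec:
  fixes f f' :: "real \<Rightarrow> real"
  assumes der: "\<And>x. x \<in> {a..b} \<Longrightarrow> (f has_real_derivative f' x) (at x within {a..b})"
    and nonpos: "\<And>x. a < x \<Longrightarrow> x < b \<Longrightarrow> f' x \<le> 0"
    and xy: "a \<le> x" "x \<le> y" "y \<le> b"
  shows "f y \<le> f x"
proof -
  have cont: "continuous_on {a..b} f" using der by (rule DERIV_continuous_on)
  show ?thesis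
  proof (rule DERIV_nonpos_imp_decreasing_open[OF xy(2)])
    fix z assume z: "x < z" "z < y"
    then have "z \<in> interior {a..b}" using xy by auto
    then have "at z within {a..b} = at z" by (rule at_within_interior)
    then show "\<exists>y. (f has_real_derivative y) (at z) \<and> y \<le> 0"
      using der[of z] nonpos[of z] z xy by auto
  next
    show "continuous_on {x..y} f" using xy by (intro continuous_on_subset[OF cont]) auto
  qed
qed




context vsetup begin

definition "Wb T = (max (1/m) T + 1) * exp (5*K*T)"
definition "bb T = T + Wb T"
definition "Am T = K * (bb T)^2 + 1/m"
definition "LL T = 2 * bb T * K + (bb T)^2 * K^2 * m + 1"
definition "MM T = 3 * Am T + 1"
definition "lam0 T = 1 / (2 * LL T * MM T)"
definition "d1 T = Am T + 2 * MM T"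
definition "d2 T = max (2 * Am T + 3 * LL T * MM T) ((Wb T + Am T) / (lam0 T)^2)"

lemma ode_est:
  fixes T lam t :: real and w :: "real \<Rightarrow> real"
  assumes T: "0 < T" and lam: "0 < lam" "lam \<le> 1" and w0: "w 0 = 1/m"
    and hw: "\<forall>t\<in>{0..T}. 0 < w t \<and> (w has_real_derivative (lam / (w t * E0 v (t + w t)) - 1)) (at t within {0..T})"
    and t: "1/m + d1 T * lam * ln (1/lam) \<le> t" "t \<le> T"
  shows "\<bar>w t - lam / E0 v t\<bar> \<le> d2 T * lam^2"
proof -
  define B where "B = max (1/m) T + 1"
  define W where "W = Wb T"
  define b where "b = bb T"
  define AM where "AM = Am T"
  define L where "L = LL T"
  define M where "M = MM T"
  have m0: "0 < m" by (rule m_pos)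
  have B1: "1 \<le> B" "T < B" "1/m < B" using T m0 by (auto simp: B_def)
  have W: "W = B * exp (5*K*T)" by (simp add: W_def Wb_def B_def)
  have "1 \<le> exp (5*K*T)" using K1 T by simp
  then have WB: "B \<le> W" using B1 W by (simp add: mult_le_cancel_left1)
  have b: "b = T + W" by (simp add: b_def bb_def W_def)
  have b0: "0 < b" using b WB B1 T by simp
  have AM: "AM = K * b^2 + 1/m" by (simp add: AM_def Am_def b_def)
  have kb: "0 \<le> K * b^2" using K1 by simp
  have "0 < 1/m" using m0 by simp
  then have AM0: "0 < AM" "1/m \<le> AM" using AM kb by linarith+
  have "m * AM = m * (K * b^2) + 1" using AM m0 by (simp add: algebra_simps)
  then have AM1: "1 \<le> m * AM" using kb m0 by simp
  have L: "L = 2 * b * K + b^2 * K^2 * m + 1" by (simp add: L_def LL_def b_def)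
  have L1: "1 \<le> L" "2 * b * K + b^2 * K^2 * m \<le> L" using L b0 K1 m0 by auto
  have M: "M = 3 * AM + 1" by (simp add: M_def MM_def AM_def)
  have M1: "1 \<le> M" "AM < M" using M AM0 by auto
  have lam0: "lam0 T = 1 / (2 * L * M)" by (simp add: lam0_def L_def M_def)
  have d1: "d1 T = AM + 2 * M" by (simp add: d1_def AM_def M_def)
  have d2: "d2 T = max (2 * AM + 3 * L * M) ((W + AM) / (lam0 T)^2)"
    by (simp add: d2_def AM_def L_def M_def W_def)
  define D where "D u = lam * A (u + w u) / w u - 1" for u
  have wpos: "\<And>u. u \<in> {0..T} \<Longrightarrow> 0 < w u" using hw by blast
  have dw: "\<And>u. u \<in> {0..T} \<Longrightarrow> (w has_real_derivative D u) (at u within {0..T})"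
  proof -
    fix u assume u: "u \<in> {0..T}"
    have "lam / (w u * E0 v (u + w u)) = lam * A (u + w u) / w u"
      using E0_pos[of "u + w u"] wpos[OF u] by (simp add: A_def)
    moreover have "(w has_real_derivative (lam / (w u * E0 v (u + w u)) - 1)) (at u within {0..T})"
      using hw u by blast
    ultimately show "(w has_real_derivative D u) (at u within {0..T})"
      by (simp add: D_def)
  qed
  have wcont: "continuous_on {0..T} w" using dw by (rule DERIV_continuous_on)
  have AK: "\<And>s. 0 < s \<Longrightarrow> lam * A s \<le> K * s^2"
  proof -
    fix s :: real assume "0 < s"
    then have "A s \<le> K * s^2" using A_bounds by blast
    moreover have "lam * A s \<le> A s" using lam A_pos[of s] by (simp add: mult_left_le_one_le)
    ultimately show "lam * A s \<le> K * s^2" by linarith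
  qed
  have wle0: "\<forall>u\<in>{0..T}. w u - B * exp (5*K*u) \<le> 0"
  proof (rule barrier)
    show "0 \<le> T" using T by simp
    show "continuous_on {0..T} (\<lambda>u. w u - B * exp (5*K*u))"
      by (intro continuous_intros wcont)
    show "w 0 - B * exp (5*K*0) \<le> 0" using w0 B1 by simp
  next
    fix u assume u: "0 \<le> u" "u < T" and fu: "w u - B * exp (5*K*u) = 0"
    have uu: "u \<in> {0..T}" using u by simp
    have der: "((\<lambda>u. w u - B * exp (5*K*u)) has_real_derivative (D u - B * (exp (5*K*u) * (5*K)))) (at u within {0..T})"
      by (auto intro!: derivative_eq_intros dw[OF uu])
    have wu: "w u = B * exp (5*K*u)" using fu by simp
    have wuB: "B \<le> w u" using wu K1 u B1 by (simp add: mult_le_cancel_left1)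
    have s0: "0 < u + w u" using u wpos[OF uu] by simp
    have "lam * A (u + w u) \<le> K * (u + w u)^2" using AK[OF s0] .
    also have "\<dots> \<le> K * (2 * w u)^2" using u B1 wuB wpos[OF uu] K1
      by (intro mult_left_mono power_mono) auto
    finally have "lam * A (u + w u) / w u \<le> K * (2 * w u)^2 / w u"
      using wpos[OF uu] by (simp add: divide_right_mono)
    also have "\<dots> = 4 * K * w u" using wpos[OF uu] by (simp add: power2_eq_square)
    finally have "D u \<le> 4 * K * w u - 1" by (simp add: D_def)
    moreover have e: "B * (exp (5*K*u) * (5*K)) = 5*K*w u" using wu by simp
    moreover have "0 < K * w u" using K1 wpos[OF uu] by simp
    ultimately have neg: "D u - B * (exp (5*K*u) * (5*K)) < 0" by linarith
    obtain d where d: "d > 0" "\<forall>h>0. u + h \<in> {0..T} \<longrightarrow> h < d \<longrightarrow>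
        (w u - B * exp (5*K*u)) > (w (u+h) - B * exp (5*K*(u+h)))"
      using has_real_derivative_neg_dec_right[OF der neg] by blast
    show "\<exists>d>0. \<forall>h>0. h < d \<longrightarrow> u + h \<le> T \<longrightarrow> w (u + h) - B * exp (5*K*(u+h)) \<le> 0"
      using d fu u by (intro exI[of _ d]) (auto simp: less_imp_le)
  qed
  have wle: "\<And>u. u \<in> {0..T} \<Longrightarrow> w u \<le> W"
  proof -
    fix u assume u: "u \<in> {0..T}"
    have "exp (5*K*u) \<le> exp (5*K*T)" using u K1 by (auto intro!: mult_left_mono)
    then show "w u \<le> W" using wle0 u B1 W by (smt (verit) mult_left_mono)
  qed
  have sge0: "\<forall>u\<in>{0..T}. 1/m - (u + w u) \<le> 0"
  proof (rule barrier)
    show "0 \<le> T" using T by simp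
    show "continuous_on {0..T} (\<lambda>u. 1/m - (u + w u))"
      by (intro continuous_intros wcont)
    show "1/m - (0 + w 0) \<le> 0" using w0 by simp
  next
    fix u assume u: "0 \<le> u" "u < T" and fu: "1/m - (u + w u) = 0"
    have uu: "u \<in> {0..T}" using u by simp
    have der: "((\<lambda>u. 1/m - (u + w u)) has_real_derivative (- (1 + D u))) (at u within {0..T})"
      by (auto intro!: derivative_eq_intros dw[OF uu])
    have "0 < lam * A (u + w u) / w u" using lam A_pos wpos[OF uu] by simp
    then have neg: "- (1 + D u) < 0" by (simp add: D_def)
    obtain d where d: "d > 0" "\<forall>h>0. u + h \<in> {0..T} \<longrightarrow> h < d \<longrightarrow>
        (1/m - (u + w u)) > (1/m - ((u+h) + w (u+h)))"
      using has_real_derivative_neg_dec_right[OF der neg] by blast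
    show "\<exists>d>0. \<forall>h>0. h < d \<longrightarrow> u + h \<le> T \<longrightarrow> 1/m - ((u + h) + w (u + h)) \<le> 0"
      using d fu u by (intro exI[of _ d]) (auto simp: less_imp_le)
  qed
  have sge: "\<And>u. u \<in> {0..T} \<Longrightarrow> 1/m \<le> u + w u" using sge0 by auto
  have sle: "\<And>u. u \<in> {0..T} \<Longrightarrow> u + w u \<le> b" using wle b by fastforce
  have Ale: "\<And>s. 1/m \<le> s \<Longrightarrow> s \<le> b \<Longrightarrow> A s \<le> AM"
  proof -
    fix s assume s: "1/m \<le> s" "s \<le> b"
    have s0: "0 < s" using s m0 by (meson less_le_trans zero_less_divide_1_iff)
    have "A s \<le> K * s^2" using A_bounds[OF s0] by blast
    also have "\<dots> \<le> K * b^2" using s s0 K1 by (intro mult_left_mono power_mono) auto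
    finally show "A s \<le> AM" using AM \<open>0 < 1/m\<close> by linarith
  qed
  have Alip: "\<And>s1 s2. 1/m \<le> s1 \<Longrightarrow> s1 \<le> b \<Longrightarrow> 1/m \<le> s2 \<Longrightarrow> s2 \<le> b \<Longrightarrow> \<bar>A s1 - A s2\<bar> \<le> L * \<bar>s1 - s2\<bar>"
  proof -
    fix s1 s2 assume s: "1/m \<le> s1" "s1 \<le> b" "1/m \<le> s2" "s2 \<le> b"
    have "\<bar>A s1 - A s2\<bar> \<le> (2 * b * K + b^2 * K^2 * m) * \<bar>s1 - s2\<bar>" using A_lip s by blast
    also have "\<dots> \<le> L * \<bar>s1 - s2\<bar>" using L1 by (intro mult_right_mono) auto
    finally show "\<bar>A s1 - A s2\<bar> \<le> L * \<bar>s1 - s2\<bar>" .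
  qed
  have Acont: "continuous_on {1/m..b} A"
  proof (rule lipschitz_on_continuous_on)
    show "L-lipschitz_on {1/m..b} A"
      using Alip L1 by (intro lipschitz_onI) (auto simp: dist_real_def)
  qed
  have qcont: "continuous_on {0..T} (\<lambda>u. A (u + w u))"
    by (rule continuous_on_compose2[OF Acont]) (use sge sle in \<open>auto intro!: continuous_intros wcont\<close>)
  have smono: "\<And>x y. 0 \<le> x \<Longrightarrow> x \<le> y \<Longrightarrow> y \<le> T \<Longrightarrow> x + w x \<le> y + w y"
  proof -
    fix x y :: real assume xy: "0 \<le> x" "x \<le> y" "y \<le> T"
    have "(\<lambda>u. - (u + w u)) y \<le> (\<lambda>u. - (u + w u)) x"
    proof (rule within_nonpos_dec[where f = "\<lambda>u. - (u + w u)" and f' = "\<lambda>u. - (1 + D u)" and a = 0 and b = T])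
      fix u assume "u \<in> {0..T}"
      then show "((\<lambda>u. - (u + w u)) has_real_derivative - (1 + D u)) (at u within {0..T})"
        by (auto intro!: derivative_eq_intros dw)
    next
      fix u assume "0 < u" "u < T"
      then have "0 < lam * A (u + w u) / w u" using lam A_pos wpos by simp
      then show "- (1 + D u) \<le> 0" by (simp add: D_def)
    qed (use xy in auto)
    then show "x + w x \<le> y + w y" by simp
  qed
  show ?thesis
  proof (cases "lam0 T \<le> lam")
    case True
    have l0: "0 < lam0 T" using lam0 L1 M1 by simp
    have "0 \<le> ln (1/lam)" using lam by simp
    then have "0 \<le> d1 T * lam * ln (1/lam)" using d1 AM0 M1 lam by simp
    then have tt: "1/m \<le> t" "t \<in> {0..T}" using t m0 by (auto intro: order_trans[of 0 "1/m"])
    have At: "A t \<le> AM" using Ale[of t] tt b WB B1 t by simp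
    have "lam / E0 v t = lam * A t" by (simp add: A_def)
    moreover have "0 \<le> lam * A t" "lam * A t \<le> AM" using lam A_pos[of t] At
      by (auto intro: order_trans[OF mult_left_le_one_le])
    moreover have "0 < w t" "w t \<le> W" using wpos wle tt by auto
    ultimately have "\<bar>w t - lam / E0 v t\<bar> \<le> W + AM" by auto
    also have "\<dots> = (W + AM) / (lam0 T)^2 * (lam0 T)^2" using l0 by simp
    also have "\<dots> \<le> (W + AM) / (lam0 T)^2 * lam^2" using l0 True AM0 WB B1
      by (intro mult_left_mono power_mono) auto
    also have "\<dots> \<le> d2 T * lam^2" unfolding d2 by (intro mult_right_mono) auto
    finally show ?thesis .
  next
    case False
    have lamlt: "lam < 1 / (2 * L * M)" using False lam0 by simp
    have LM: "1 \<le> L * M" using L1 M1 by (metis mult_mono' mult_1 zero_le_one order_trans)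
    have "1 / (2 * L * M) \<le> 1/2" using LM by (simp add: field_simps)
    then have lam1: "lam < 1" using lamlt by simp
    have lnpos: "0 < ln (1/lam)" using lam lam1 by simp
    define c where "c = lam * AM"
    have c0: "0 < c" using lam AM0 by (simp add: c_def)
    define \<delta> where "\<delta> = 2 * lam^2 * L * M"
    have \<delta>0: "0 < \<delta>" using lam L1 M1 by (simp add: \<delta>_def)
    have "2 * lam * L * M < 1" using lamlt LM by (simp add: field_simps)
    moreover have "\<delta> = lam * (2 * lam * L * M)" by (simp add: \<delta>_def power2_eq_square algebra_simps)
    ultimately have \<delta>lam: "\<delta> \<le> lam" using lam mult_left_mono[of "2 * lam * L * M" 1 lam] by simp
    have Dle: "\<And>u. u \<in> {0..T} \<Longrightarrow> D u \<le> c / w u - 1"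
    proof -
      fix u assume u: "u \<in> {0..T}"
      have "lam * A (u + w u) \<le> c" unfolding c_def using Ale[OF sge[OF u] sle[OF u]] lam
        by (simp add: mult_left_mono)
      then show "D u \<le> c / w u - 1" using wpos[OF u] by (simp add: D_def divide_right_mono)
    qed
    define t0 where "t0 = t - 2 * lam * M * ln (1/lam)"
    have "d1 T * lam * ln (1/lam) = AM * lam * ln (1/lam) + 2 * lam * M * ln (1/lam)"
      unfolding d1 by (simp add: algebra_simps)
    then have t0ge: "1/m + AM * lam * ln (1/lam) \<le> t0" using t by (simp add: t0_def)
    have "0 \<le> AM * lam * ln (1/lam)" using AM0 lam lnpos by simp
    then have t0ge': "1/m \<le> t0" using t0ge by linarith
    have t0le: "t0 \<le> t" using lam M1 lnpos by (simp add: t0_def)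
    have t00: "0 \<le> t0" using t0ge' m0 by (meson less_eq_real_def order_trans zero_le_divide_1_iff)
    have "\<exists>\<tau>\<in>{0..t0}. w \<tau> \<le> 2 * c"
    proof (rule ccontr)
      assume "\<not> ?thesis"
      then have big: "\<And>\<tau>. \<tau> \<in> {0..t0} \<Longrightarrow> 2 * c < w \<tau>" by force
      have sub: "{0..t0} \<subseteq> {0..T}" using t0le t by auto
      have "(\<lambda>y. w y + c * ln (w y - c) + y) t0 \<le> (\<lambda>y. w y + c * ln (w y - c) + y) 0"
      proof (rule within_nonpos_dec[where f = "\<lambda>y. w y + c * ln (w y - c) + y"
            and f' = "\<lambda>y. D y + c * (D y / (w y - c)) + 1" and a = 0 and b = t0])
        fix y assume y: "y \<in> {0..t0}"
        have dy: "(w has_real_derivative D y) (at y within {0..t0})"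
          using dw[of y] y sub by (auto intro: DERIV_subset)
        have "0 < w y - c" using big[OF y] c0 by simp
        then show "((\<lambda>y. w y + c * ln (w y - c) + y) has_real_derivative D y + c * (D y / (w y - c)) + 1) (at y within {0..t0})"
          by (auto intro!: derivative_eq_intros dy)
      next
        fix y assume y: "0 < y" "y < t0"
        then have yy: "y \<in> {0..t0}" "y \<in> {0..T}" using sub by auto
        define W' where "W' = w y"
        have W'c: "2 * c < W'" using big[OF yy(1)] by (simp add: W'_def)
        have Dy: "D y \<le> (c - W') / W'" using Dle[OF yy(2)] W'c c0 by (simp add: W'_def field_simps)
        have pos: "0 < W' / (W' - c)" using W'c c0 by simp
        have "D y + c * (D y / (w y - c)) + 1 = D y * (W' / (W' - c)) + 1"
          using W'c c0 by (simp add: W'_def field_simps)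
        also have "D y * (W' / (W' - c)) \<le> (c - W') / W' * (W' / (W' - c))"
          using Dy pos by (intro mult_right_mono) auto
        also have "(c - W') / W' * (W' / (W' - c)) = -1" using W'c c0 by (simp add: field_simps)
        finally show "D y + c * (D y / (w y - c)) + 1 \<le> 0" by simp
      qed (use t00 in auto)
      then have ineq: "w t0 + c * ln (w t0 - c) + t0 \<le> 1/m + c * ln (1/m - c)" using w0 by simp
      have bt0: "2 * c < w t0" using big t00 by auto
      have "ln c < ln (w t0 - c)" using bt0 c0 by simp
      then have "c * ln c < c * ln (w t0 - c)" using c0 by (simp add: mult_strict_left_mono)
      then have "2 * c + c * ln c < w t0 + c * ln (w t0 - c)" using bt0 by linarith
      have b00: "2 * c < 1/m" using big[of 0] t00 w0 by simp
      have p1: "0 < 1/m - c" using b00 c0 by simp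
      have "ln (1/m - c) \<le> ln (1/m)" using p1 c0 m0 by (subst ln_le_cancel_iff) auto
      then have "c * ln (1/m - c) \<le> c * ln (1/m)" using c0 by (simp add: mult_left_mono)
      have lneq: "ln (1/m) - ln c = ln (1/lam) - ln (m * AM)"
        using m0 lam AM0 by (simp add: c_def ln_div ln_mult)
      have "0 \<le> ln (m * AM)" using AM1 by simp
      have "c * (ln (1/m) - ln c) = c * ln (1/m) - c * ln c" by (simp add: right_diff_distrib)
      then have "t0 < 1/m + c * (ln (1/m) - ln c)"
        using ineq \<open>2 * c + c * ln c < w t0 + c * ln (w t0 - c)\<close> \<open>c * ln (1/m - c) \<le> c * ln (1/m)\<close> c0
        by linarith
      also have "\<dots> \<le> 1/m + c * ln (1/lam)" unfolding lneq using c0 \<open>0 \<le> ln (m * AM)\<close>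
        by (simp add: mult_left_mono)
      also have "\<dots> = 1/m + AM * lam * ln (1/lam)" by (simp add: c_def)
      finally show False using t0ge by simp
    qed
    then obtain \<tau> where \<tau>: "0 \<le> \<tau>" "\<tau> \<le> t0" "w \<tau> \<le> 2 * c" by auto
    define \<gamma> where "\<gamma> = 1 / (2 * lam * M)"
    have \<gamma>0: "0 < \<gamma>" using lam M1 by (simp add: \<gamma>_def)
    define \<beta> where "\<beta> y = 2 * c * exp (- \<gamma> * (y - \<tau>))" for y
    define q where "q y = lam * A (y + w y)" for y
    have \<tau>T: "\<tau> \<le> T" "\<tau> \<le> t" using \<tau> t0le t by auto
    have \<beta>0: "\<And>y. 0 < \<beta> y" using c0 by (simp add: \<beta>_def)
    have \<beta>le: "\<And>y. \<tau> \<le> y \<Longrightarrow> \<beta> y \<le> 2 * c"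
    proof -
      fix y assume "\<tau> \<le> y"
      then have "exp (- \<gamma> * (y - \<tau>)) \<le> 1" using \<gamma>0 by (simp add: mult_nonneg_nonneg)
      then show "\<beta> y \<le> 2 * c" using c0 by (simp add: \<beta>_def)
    qed
    have d\<beta>: "\<And>y S. (\<beta> has_real_derivative (- \<gamma> * \<beta> y)) (at y within S)"
    proof -
      fix y :: real and S
      have "((\<lambda>y. 2 * c * exp (- \<gamma> * (y - \<tau>))) has_real_derivative (2 * c * (exp (- \<gamma> * (y - \<tau>)) * (- \<gamma>)))) (at y within S)"
        by (auto intro!: derivative_eq_intros)
      then show "(\<beta> has_real_derivative (- \<gamma> * \<beta> y)) (at y within S)"
        unfolding \<beta>_def[abs_def] by (simp add: algebra_simps)
    qed
    have \<beta>cont: "continuous_on S \<beta>" for S unfolding \<beta>_def by (intro continuous_intros)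
    have qb: "\<And>u. u \<in> {0..T} \<Longrightarrow> 0 \<le> q u \<and> q u \<le> c"
    proof -
      fix u assume u: "u \<in> {0..T}"
      show "0 \<le> q u \<and> q u \<le> c" unfolding q_def c_def
        using Ale[OF sge[OF u] sle[OF u]] lam A_pos[of "u + w u"] by (simp add: mult_left_mono)
    qed
    have qlip: "\<And>u y. u \<in> {0..T} \<Longrightarrow> y \<in> {0..T} \<Longrightarrow> u \<le> y \<Longrightarrow>
        \<bar>q u - q y\<bar> \<le> lam * L * ((y + w y) - (u + w u))"
    proof -
      fix u y assume u: "u \<in> {0..T}" and y: "y \<in> {0..T}" and uy: "u \<le> y"
      have "\<bar>q u - q y\<bar> = lam * \<bar>A (u + w u) - A (y + w y)\<bar>"
        unfolding q_def using lam by (simp add: right_diff_distrib[symmetric] abs_mult)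
      also have "\<dots> \<le> lam * (L * \<bar>(u + w u) - (y + w y)\<bar>)"
        using Alip[OF sge[OF u] sle[OF u] sge[OF y] sle[OF y]] lam by (simp add: mult_left_mono)
      also have "\<bar>(u + w u) - (y + w y)\<bar> = (y + w y) - (u + w u)"
        using smono[of u y] u y uy by simp
      finally show "\<bar>q u - q y\<bar> \<le> lam * L * ((y + w y) - (u + w u))" by (simp add: mult.assoc)
    qed
    have Dq: "\<And>u. u \<in> {0..T} \<Longrightarrow> 1 + D u = q u / w u" by (simp add: D_def q_def)
    have qc: "continuous_on {\<tau>..T} q"
    proof -
      have "continuous_on {0..T} q" unfolding q_def by (intro continuous_intros qcont)
      then show ?thesis by (rule continuous_on_subset) (use \<tau> in auto)
    qed
    have wc: "continuous_on {\<tau>..T} w" by (rule continuous_on_subset[OF wcont]) (use \<tau> in auto)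
    have lMpos: "0 < lam * M" using lam M1 by simp
    have \<delta>eq: "\<delta> / (lam * M) = 2 * (lam * L)" using lam M1 by (simp add: \<delta>_def power2_eq_square field_simps)
    have \<gamma>\<beta>: "\<And>y. \<gamma> * \<beta> y = (\<beta> y / (lam * M)) / 2" by (simp add: \<gamma>_def field_simps)
    have lMc: "lam * M = 3 * c + lam" by (simp add: M c_def algebra_simps)
    have up: "\<forall>u\<in>{\<tau>..T}. w u - q u - \<beta> u - \<delta> \<le> 0"
    proof (rule barrier)
      show "\<tau> \<le> T" by (rule \<tau>T)
      show "continuous_on {\<tau>..T} (\<lambda>u. w u - q u - \<beta> u - \<delta>)"
        by (intro continuous_intros wc qc \<beta>cont)
      show "w \<tau> - q \<tau> - \<beta> \<tau> - \<delta> \<le> 0" using \<tau> qb[of \<tau>] \<tau>T \<delta>0 by (simp add: \<beta>_def)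
    next
      fix u assume u: "\<tau> \<le> u" "u < T" and fu: "w u - q u - \<beta> u - \<delta> = 0"
      have uu: "u \<in> {0..T}" using u \<tau> by simp
      define g where "g y = w y - q u + lam * L * ((y + w y) - (u + w u)) - \<beta> y - \<delta>" for y
      have der: "(g has_real_derivative (D u + lam * L * (1 + D u) - (- \<gamma> * \<beta> u))) (at u within {0..T})"
        unfolding g_def[abs_def] by (auto intro!: derivative_eq_intros dw[OF uu] d\<beta>)
      define Wu where "Wu = w u"
      have Wu0: "0 < Wu" using wpos[OF uu] by (simp add: Wu_def)
      have Wueq: "Wu = q u + \<beta> u + \<delta>" using fu by (simp add: Wu_def)
      have WulM: "Wu \<le> lam * M" using Wueq qb[OF uu] \<beta>le[OF u(1)] \<delta>lam lMc by linarith
      have qW: "q u / Wu \<le> 1" using Wueq Wu0 \<beta>0[of u] \<delta>0 by simp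
      have Du: "D u = - ((\<beta> u + \<delta>) / Wu)" using Dq[OF uu] Wueq Wu0 unfolding Wu_def[symmetric]
        by (simp add: field_simps)
      have "(\<beta> u + \<delta>) / (lam * M) \<le> (\<beta> u + \<delta>) / Wu"
        using WulM Wu0 \<beta>0[of u] \<delta>0 by (intro divide_left_mono) auto
      moreover have "(\<beta> u + \<delta>) / (lam * M) = \<beta> u / (lam * M) + 2 * (lam * L)"
        using \<delta>eq by (simp add: add_divide_distrib)
      moreover have "lam * L * (1 + D u) \<le> lam * L"
      proof -
        have "1 + D u \<le> 1" using Dq[OF uu] qW unfolding Wu_def by simp
        then show ?thesis using lam L1 mult_left_mono[of "1 + D u" 1 "lam * L"] by simp
      qed
      moreover have "0 \<le> \<beta> u / (lam * M)" using \<beta>0[of u] lMpos by simp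
      moreover have "0 < lam * L" using lam L1 by simp
      ultimately have neg0: "D u + lam * L * (1 + D u) + \<gamma> * \<beta> u < 0"
      proof -
        have key: "\<And>Du Y G X Z Z' P :: real. Du = -Z \<Longrightarrow> Z' \<le> Z \<Longrightarrow> Z' = X + 2 * P \<Longrightarrow> Y \<le> P \<Longrightarrow> 0 \<le> X \<Longrightarrow> 0 < P \<Longrightarrow> G = X / 2 \<Longrightarrow> Du + Y + G < 0"
          by linarith
        assume a: "(\<beta> u + \<delta>) / (lam * M) \<le> (\<beta> u + \<delta>) / Wu"
          "(\<beta> u + \<delta>) / (lam * M) = \<beta> u / (lam * M) + 2 * (lam * L)"
          "lam * L * (1 + D u) \<le> lam * L" "0 \<le> \<beta> u / (lam * M)" "0 < lam * L"
        show ?thesis by (rule key[OF Du a(1) a(2) a(3) a(4) a(5) \<gamma>\<beta>[of u]])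
      qed
      have neg: "D u + lam * L * (1 + D u) - (- \<gamma> * \<beta> u) < 0" using neg0 by simp
      obtain d where d: "d > 0" "\<forall>h>0. u + h \<in> {0..T} \<longrightarrow> h < d \<longrightarrow> g u > g (u + h)"
        using has_real_derivative_neg_dec_right[OF der neg] by blast
      have gu: "g u = 0" using fu by (simp add: g_def)
      show "\<exists>d>0. \<forall>h>0. h < d \<longrightarrow> u + h \<le> T \<longrightarrow> w (u + h) - q (u + h) - \<beta> (u + h) - \<delta> \<le> 0"
      proof (intro exI[of _ d] conjI allI impI)
        fix h :: real assume h: "0 < h" "h < d" "u + h \<le> T"
        have uh: "u + h \<in> {0..T}" using h uu by auto
        have "g (u + h) < 0" using d h uh gu by auto
        moreover have "q u - q (u + h) \<le> lam * L * ((u + h + w (u + h)) - (u + w u))"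
          using qlip[OF uu uh] h by simp
        ultimately show "w (u + h) - q (u + h) - \<beta> (u + h) - \<delta> \<le> 0" unfolding g_def by linarith
      qed (use d in auto)
    qed
    have lo: "\<forall>u\<in>{\<tau>..T}. q u - \<beta> u - \<delta> - w u \<le> 0"
    proof (rule barrier)
      show "\<tau> \<le> T" by (rule \<tau>T)
      show "continuous_on {\<tau>..T} (\<lambda>u. q u - \<beta> u - \<delta> - w u)"
        by (intro continuous_intros wc qc \<beta>cont)
      show "q \<tau> - \<beta> \<tau> - \<delta> - w \<tau> \<le> 0" using \<tau> qb[of \<tau>] \<tau>T \<delta>0 wpos[of \<tau>] c0 by (simp add: \<beta>_def)
    next
      fix u assume u: "\<tau> \<le> u" "u < T" and fu: "q u - \<beta> u - \<delta> - w u = 0"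
      have uu: "u \<in> {0..T}" using u \<tau> by simp
      define g where "g y = q u + lam * L * ((y + w y) - (u + w u)) - \<beta> y - \<delta> - w y" for y
      have der: "(g has_real_derivative (lam * L * (1 + D u) - (- \<gamma> * \<beta> u) - D u)) (at u within {0..T})"
        unfolding g_def[abs_def] by (auto intro!: derivative_eq_intros dw[OF uu] d\<beta>)
      define Wu where "Wu = w u"
      have Wu0: "0 < Wu" using wpos[OF uu] by (simp add: Wu_def)
      have Wueq: "Wu = q u - \<beta> u - \<delta>" using fu by (simp add: Wu_def)
      have WulM: "Wu \<le> lam * M" using Wueq qb[OF uu] \<beta>0[of u] \<delta>0 lMc c0 lam by linarith
      have Du: "D u = (\<beta> u + \<delta>) / Wu"
      proof -
        have "D u = q u / Wu - 1" using Dq[OF uu] by (simp add: Wu_def)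
        also have "\<dots> = (q u - Wu) / Wu" using Wu0 by (simp add: field_simps)
        also have "q u - Wu = \<beta> u + \<delta>" using Wueq by simp
        finally show ?thesis .
      qed
      have "lam * L * q u \<le> lam * L * c" using qb[OF uu] lam L1 by (intro mult_left_mono) auto
      also have "\<dots> = lam^2 * L * AM" by (simp add: c_def power2_eq_square)
      also have "\<dots> < \<delta>" unfolding \<delta>_def using lam L1 M1 by (simp add: mult_strict_left_mono)
      finally have Lq: "lam * L * q u < \<delta>" .
      define N where "N = lam * L * q u - \<beta> u - \<delta>"
      have N0: "N < 0" using Lq \<beta>0[of u] by (simp add: N_def)
      have e1: "1 + D u = q u / Wu" using Dq[OF uu] by (simp add: Wu_def)
      have "lam * L * (1 + D u) - (- \<gamma> * \<beta> u) - D u = lam * L * (q u / Wu) + \<gamma> * \<beta> u - (\<beta> u + \<delta>) / Wu"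
        unfolding e1 Du[symmetric] by simp
      also have "\<dots> = N / Wu + \<gamma> * \<beta> u" using Wu0 by (simp add: N_def field_simps)
      finally have eq: "lam * L * (1 + D u) - (- \<gamma> * \<beta> u) - D u = N / Wu + \<gamma> * \<beta> u" .
      have "N / Wu \<le> N / (lam * M)"
        using N0 Wu0 WulM by (simp add: divide_le_eq_1 field_simps mult_left_mono_neg)
      moreover have "N / (lam * M) + \<gamma> * \<beta> u = (N + \<beta> u / 2) / (lam * M)"
        using lMpos by (simp add: \<gamma>\<beta> add_divide_distrib)
      moreover have "N + \<beta> u / 2 < 0" using Lq \<beta>0[of u] by (simp add: N_def)
      moreover have "(N + \<beta> u / 2) / (lam * M) < 0" using calculation(3) lMpos by (simp add: divide_neg_pos)
      ultimately have neg: "lam * L * (1 + D u) - (- \<gamma> * \<beta> u) - D u < 0" using eq by linarith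
      obtain d where d: "d > 0" "\<forall>h>0. u + h \<in> {0..T} \<longrightarrow> h < d \<longrightarrow> g u > g (u + h)"
        using has_real_derivative_neg_dec_right[OF der neg] by blast
      have gu: "g u = 0" using fu by (simp add: g_def)
      show "\<exists>d>0. \<forall>h>0. h < d \<longrightarrow> u + h \<le> T \<longrightarrow> q (u + h) - \<beta> (u + h) - \<delta> - w (u + h) \<le> 0"
      proof (intro exI[of _ d] conjI allI impI)
        fix h :: real assume h: "0 < h" "h < d" "u + h \<le> T"
        have uh: "u + h \<in> {0..T}" using h uu by auto
        have "g (u + h) < 0" using d h uh gu by auto
        moreover have "q (u + h) - q u \<le> lam * L * ((u + h + w (u + h)) - (u + w u))"
          using qlip[OF uu uh] h by simp
        ultimately show "q (u + h) - \<beta> (u + h) - \<delta> - w (u + h) \<le> 0" unfolding g_def by linarith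
      qed (use d in auto)
    qed
    have tt: "t \<in> {\<tau>..T}" "t \<in> {0..T}" using \<tau>T t \<tau> by auto
    have "w t - q t - \<beta> t - \<delta> \<le> 0" using up tt(1) by blast
    then have upt: "w t \<le> q t + \<beta> t + \<delta>" by linarith
    have "q t - \<beta> t - \<delta> - w t \<le> 0" using lo tt(1) by blast
    then have lot: "q t - \<beta> t - \<delta> \<le> w t" by linarith
    have "ln (1/lam) \<le> \<gamma> * (t - \<tau>)"
    proof -
      have "t - t0 \<le> t - \<tau>" using \<tau> by simp
      then have "\<gamma> * (t - t0) \<le> \<gamma> * (t - \<tau>)" using \<gamma>0 by (simp add: mult_left_mono)
      moreover have "\<gamma> * (t - t0) = ln (1/lam)" using lam M1 by (simp add: \<gamma>_def t0_def field_simps)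
      ultimately show ?thesis by simp
    qed
    then have "exp (- \<gamma> * (t - \<tau>)) \<le> exp (- ln (1/lam))" by simp
    also have "exp (- ln (1/lam)) = lam" using lam by (simp add: ln_div)
    finally have "\<beta> t \<le> 2 * c * lam" using c0 by (simp add: \<beta>_def)
    moreover have "2 * c * lam = 2 * AM * lam^2" by (simp add: c_def power2_eq_square)
    ultimately have bt: "\<beta> t \<le> 2 * AM * lam^2" by simp
    have wtM: "w t \<le> lam * M" using upt qb[OF tt(2)] \<beta>le[of t] tt \<delta>lam lMc by auto
    have t1: "1/m \<le> t" using t0ge' t0le by simp
    have "\<bar>q t - lam * A t\<bar> = lam * \<bar>A (t + w t) - A t\<bar>"
      unfolding q_def using lam by (simp add: right_diff_distrib[symmetric] abs_mult)
    also have "\<dots> \<le> lam * (L * \<bar>(t + w t) - t\<bar>)"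
      using Alip[OF sge[OF tt(2)] sle[OF tt(2)] t1] t b WB B1 lam by (intro mult_left_mono) auto
    also have "\<bar>(t + w t) - t\<bar> = w t" using wpos[OF tt(2)] by simp
    also have "lam * (L * w t) \<le> lam * (L * (lam * M))" using wtM lam L1 by (intro mult_left_mono) auto
    finally have qA: "\<bar>q t - lam * A t\<bar> \<le> lam^2 * L * M" by (simp add: power2_eq_square algebra_simps)
    have "lam / E0 v t = lam * A t" by (simp add: A_def)
    then have "\<bar>w t - lam / E0 v t\<bar> \<le> \<bar>w t - q t\<bar> + \<bar>q t - lam * A t\<bar>" by simp
    also have "\<dots> \<le> (2 * AM * lam^2 + \<delta>) + lam^2 * L * M" using upt lot bt qA by auto
    also have "\<dots> = (2 * AM + 3 * L * M) * lam^2" by (simp add: \<delta>_def algebra_simps)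
    also have "\<dots> \<le> d2 T * lam^2" unfolding d2 by (intro mult_right_mono) auto
    finally show ?thesis .
  qed
qed

end

theorem lemma16:
  fixes v :: "nat \<Rightarrow> real" and T :: real
  assumes "Nstar v" and "v \<noteq> (\<lambda>k. 0)" and "T > 0"
  shows "\<exists>d1 d2 :: real. \<forall>(lam::real) (w::real \<Rightarrow> real).
           0 < lam \<and> lam \<le> 1 \<and>
           w 0 = 1 / m1 v \<and>
           (\<forall>t\<in>{0..T}. 0 < w t \<and>
              (w has_real_derivative (lam / (w t * E0 v (t + w t)) - 1)) (at t within {0..T}))
           \<longrightarrow> (\<forall>t. 1 / m1 v + d1 * lam * ln (1 / lam) \<le> t \<and> t \<le> T
                   \<longrightarrow> \<bar>w t - lam / E0 v t\<bar> \<le> d2 * lam ^ 2)"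
proof -
  interpret vsetup v using assms(1,2) by unfold_locales
  show ?thesis
    by (intro exI[of _ "d1 T"] exI[of _ "d2 T"] allI impI, elim conjE)
       (rule ode_est[OF assms(3)], auto)
qed

end
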